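(* Consider the following reduced-cyclic-prefix (RCP) ODDM system. Let $M,N,Q$ be positive integers, $T_s>0$, $T=MT_s$, and let $a(t)$ be a pulse with $a(t)=0$ for $|t|\ge QT_s$. Given data symbols $X[m,n]\in\mathbb{C}$, $0\le m\le M-1$, $0\le n\le N-1$, define $$x[m,\dot n]=\frac{1}{\sqrt N}\sum_{n=0}^{N-1}X[m,n]e^{j2\pi\frac{n\dot n}{N}},\quad 0\le \dot n\le N-1,$$ and the prefix $x[m,-1]=x[m,N-1]$. The transmitted baseband signal is $$s(t)=\sum_{m=0}^{M-1}\sum_{\dot n=-1}^{N-1}x[m,\dot n]\,a(t-mT_s-\dot nT).$$ The (noiseless) received baseband signal over $P$ paths is $$r(t)=\sum_{i=1}^{P}h_i e^{j2\pi\nu_i t}\,s\big(t-(\tau_i-b_i t)\big),$$ with complex gains $h_i$, delays $\tau_i=l_iT_s$, Doppler scaling factors $b_i$ and Doppler shifts $\nu_i=\frac{k_i}{NMT_s}$ (where $l_i,k_i$ are real, not necessarily integer). Assume $l_{\min}\le l_i\le l_{\max}$ with $l_{\min},l_{\max}$ integers, $|b_i|\le b_{\max}<1$, and that the synchronization is such that $$\lceil l_{\min}-Q-b_{\max}(NM-1)\rceil=0,\qquad l'_{\max}:=\lfloor l_{\max}+Q+b_{\max}(NM-1)\rfloor<M.$$ The receiver samples $y[m,\dot n]=r(mT_s+\dot nT)$ and computes $$Y[m,n]=\frac{1}{\sqrt N}\sum_{\dot n=0}^{N-1}y[m,\dot n]e^{-j2\pi\frac{n\dot n}{N}}.$$ Then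 for all $0\le m\le M-1$, $0\le n\le N-1$, $$Y[m,n]=\sum_{l=0}^{l'_{\max}}\sum_{k=0}^{N-1}X[(m-l)_M,(n-k)_N]\,\phi[m-l,n-k]\,G_l(m,k),$$ where $$G_l(m,k)=\sum_{i=1}^{P}h_i\, e^{j2\pi\frac{k_i m}{NM}}\frac{1}{N}\sum_{\dot n=0}^{N-1}e^{-j2\pi\frac{\dot n(k-k_i)}{N}}\,a\Big(\big(l-l_i+b_i(m+\dot nM)\big)T_s\Big),$$ and, for integers $m',n'$, $$\phi[m',n']=\begin{cases}1,&0\le m'\le M-1,\\ e^{-j2\pi\frac{n'}{N}},&-M+1\le m'<0.\end{cases}$$
   Context: $(x)_M$ denotes $x$ modulo $M$ taken in $\{0,\dots,M-1\}$, and similarly $(x)_N$. $j$ is the imaginary unit. Noise is ignored. The quantities $b_i=\mathrm{v}_i/c$ model the wideband (Doppler squint) effect: each path has a time-varying delay $\tau_i-b_i t$. *)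

theory Defs
  imports Complex_Main
begin

text \<open>Indices are integers; data symbols
  X m n are meaningful for 0 \<le> m \<le> M-1, 0 \<le> n \<le> N-1.
  Paths are indexed by i = 1..P with gain h i, normalized delay lp i
  (tau_i = lp i * Ts), normalized Doppler kp i (nu_i = kp i / (N M Ts))
  and Doppler scaling factor b i.\<close>

definition oddm_x :: "nat \<Rightarrow> (int \<Rightarrow> int \<Rightarrow> complex) \<Rightarrow> int \<Rightarrow> int \<Rightarrow> complex" where
  "oddm_x N X m nd =
     (let nd' = (if nd = -1 then int N - 1 else nd) in
      complex_of_real (1 / sqrt (real N)) *
      (\<Sum>n = 0..int N - 1. X m n * exp (2 * pi * \<i> * complex_of_real (real_of_int (n * nd') / real N))))"

definition oddm_s :: "nat \<Rightarrow> nat \<Rightarrow> real \<Rightarrow> (real \<Rightarrow> complex) \<Rightarrow> (int \<Rightarrow> int \<Rightarrow> complex) \<Rightarrow> real \<Rightarrow> complex" where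
  "oddm_s M N Ts a X t =
     (\<Sum>m = 0..int M - 1. \<Sum>nd = -1..int N - 1.
        oddm_x N X m nd * a (t - real_of_int m * Ts - real_of_int nd * (real M * Ts)))"

definition oddm_r :: "nat \<Rightarrow> nat \<Rightarrow> real \<Rightarrow> (real \<Rightarrow> complex) \<Rightarrow> (int \<Rightarrow> int \<Rightarrow> complex)
    \<Rightarrow> nat \<Rightarrow> (nat \<Rightarrow> complex) \<Rightarrow> (nat \<Rightarrow> real) \<Rightarrow> (nat \<Rightarrow> real) \<Rightarrow> (nat \<Rightarrow> real) \<Rightarrow> real \<Rightarrow> complex" where
  "oddm_r M N Ts a X P h lp kp b t =
     (\<Sum>i = 1..P. h i * exp (2 * pi * \<i> * complex_of_real (kp i / (real N * real M * Ts) * t))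
        * oddm_s M N Ts a X (t - (lp i * Ts - b i * t)))"

definition oddm_Y :: "nat \<Rightarrow> nat \<Rightarrow> real \<Rightarrow> (real \<Rightarrow> complex) \<Rightarrow> (int \<Rightarrow> int \<Rightarrow> complex)
    \<Rightarrow> nat \<Rightarrow> (nat \<Rightarrow> complex) \<Rightarrow> (nat \<Rightarrow> real) \<Rightarrow> (nat \<Rightarrow> real) \<Rightarrow> (nat \<Rightarrow> real) \<Rightarrow> int \<Rightarrow> int \<Rightarrow> complex" where
  "oddm_Y M N Ts a X P h lp kp b m n =
     complex_of_real (1 / sqrt (real N)) *
     (\<Sum>nd = 0..int N - 1.
        oddm_r M N Ts a X P h lp kp b (real_of_int m * Ts + real_of_int nd * (real M * Ts))
        * exp (- 2 * pi * \<i> * complex_of_real (real_of_int (n * nd) / real N)))"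

definition oddm_G :: "nat \<Rightarrow> nat \<Rightarrow> real \<Rightarrow> (real \<Rightarrow> complex)
    \<Rightarrow> nat \<Rightarrow> (nat \<Rightarrow> complex) \<Rightarrow> (nat \<Rightarrow> real) \<Rightarrow> (nat \<Rightarrow> real) \<Rightarrow> (nat \<Rightarrow> real) \<Rightarrow> int \<Rightarrow> int \<Rightarrow> int \<Rightarrow> complex" where
  "oddm_G M N Ts a P h lp kp b l m k =
     (\<Sum>i = 1..P. h i * exp (2 * pi * \<i> * complex_of_real (kp i * real_of_int m / (real N * real M)))
        * complex_of_real (1 / real N) *
        (\<Sum>nd = 0..int N - 1.
           exp (- 2 * pi * \<i> * complex_of_real (real_of_int nd * (real_of_int k - kp i) / real N))
           * a ((real_of_int l - lp i + b i * (real_of_int m + real_of_int nd * real M)) * Ts)))"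

text \<open>phi is only specified for -M+1 \<le> m' \<le> M-1; outside that range we set it to 0
  (it is never used there).\<close>
definition oddm_phi :: "nat \<Rightarrow> nat \<Rightarrow> int \<Rightarrow> int \<Rightarrow> complex" where
  "oddm_phi M N m' n' =
     (if 0 \<le> m' \<and> m' \<le> int M - 1 then 1
      else if - int M + 1 \<le> m' \<and> m' < 0
        then exp (- 2 * pi * \<i> * complex_of_real (real_of_int n' / real N))
      else 0)"

end

theory Submission
  imports Defs "HOL-Analysis.Analysis"
begin

lemma exp_cong_int:
  fixes x y :: real and z :: int
  assumes "x - y = of_int z"
  shows "exp (2 * pi * \<i> * complex_of_real x) = exp (2 * pi * \<i> * complex_of_real y)"
proof -
  have "x = y + of_int z" using assms by simp
  then have "2 * pi * \<i> * complex_of_real x = 2 * pi * \<i> * complex_of_real y + \<i> * (of_int z * (of_real pi * 2))"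
    by (simp add: algebra_simps)
  then show ?thesis by (simp only: exp_plus_2pin)
qed

lemma bij_modN:
  fixes N :: nat and n :: int assumes "N > 0"
  shows "bij_betw (\<lambda>k. (n - k) mod int N) {0..int N - 1} {0..int N - 1}"
proof (rule bij_betw_byWitness[where f'="\<lambda>k. (n - k) mod int N"])
  show "\<forall>k\<in>{0..int N - 1}. (n - (n - k) mod int N) mod int N = k"
  proof
    fix k assume "k \<in> {0..int N - 1}"
    then have "(n - (n - k) mod int N) mod int N = (n - (n - k)) mod int N" by (simp add: mod_diff_right_eq)
    also have "\<dots> = k" using \<open>k \<in> _\<close> by simp
    finally show "(n - (n - k) mod int N) mod int N = k" .
  qed
  then show "\<forall>k\<in>{0..int N - 1}. (n - (n - k) mod int N) mod int N = k" .
  show "(\<lambda>k. (n - k) mod int N) ` {0..int N - 1} \<subseteq> {0..int N - 1}" using assms by auto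
  then show "(\<lambda>k. (n - k) mod int N) ` {0..int N - 1} \<subseteq> {0..int N - 1}" .
qed

lemma x_expand:
  fixes N :: nat assumes "N > 0" and "-1 \<le> nd" "nd \<le> int N - 1"
  shows "oddm_x N X mm nd = complex_of_real (1 / sqrt (real N)) *
     (\<Sum>k = 0..int N - 1. X mm ((n - k) mod int N) *
        exp (2 * pi * \<i> * complex_of_real (real_of_int (((n - k) mod int N) * nd) / real N)))"
proof -
  have "oddm_x N X mm nd = complex_of_real (1 / sqrt (real N)) *
     (\<Sum>n' = 0..int N - 1. X mm n' * exp (2 * pi * \<i> * complex_of_real (real_of_int (n' * nd) / real N)))"
  proof (cases "nd = -1")
    case True
    have "exp (2 * pi * \<i> * complex_of_real (real_of_int (n' * (int N - 1)) / real N)) =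
          exp (2 * pi * \<i> * complex_of_real (real_of_int (n' * nd) / real N))" for n'
      by (rule exp_cong_int[where z=n']) (use assms True in \<open>simp add: field_simps\<close>)
    then show ?thesis using True unfolding oddm_x_def by simp
  next
    case False
    then show ?thesis unfolding oddm_x_def by simp
  qed
  also have "(\<Sum>n' = 0..int N - 1. X mm n' * exp (2 * pi * \<i> * complex_of_real (real_of_int (n' * nd) / real N)))
     = (\<Sum>k = 0..int N - 1. X mm ((n - k) mod int N) *
        exp (2 * pi * \<i> * complex_of_real (real_of_int (((n - k) mod int N) * nd) / real N)))"
    using sum.reindex_bij_betw[OF bij_modN[OF assms(1), of n], symmetric] by simp
  finally show ?thesis .
qed


lemma q_range:
  fixes M N Q :: nat and Ts bmax lpi bi :: real and lmin lmax q m nd :: int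
  assumes "Ts > 0" and "real_of_int lmin \<le> lpi" "lpi \<le> real_of_int lmax"
    and "\<bar>bi\<bar> \<le> bmax"
    and "\<lceil>real_of_int lmin - real Q - bmax * (real N * real M - 1)\<rceil> = 0"
    and "0 \<le> m" and "m \<le> int M - 1" and "0 \<le> nd" and "nd \<le> int N - 1"
    and "\<bar>(real_of_int q - lpi + bi * (real_of_int m + real_of_int nd * real M)) * Ts\<bar> < real Q * Ts"
  shows "0 \<le> q \<and> q \<le> \<lfloor>real_of_int lmax + real Q + bmax * (real N * real M - 1)\<rfloor>"
proof -
  define u where "u = real_of_int m + real_of_int nd * real M"
  have u0: "0 \<le> u" using assms unfolding u_def by simp
  have "real_of_int nd * real M \<le> (real N - 1) * real M"
    using assms by (intro mult_right_mono) auto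
  then have u1: "u \<le> real N * real M - 1" using assms unfolding u_def
    by (simp add: algebra_simps)
  have "\<bar>bi * u\<bar> \<le> bmax * (real N * real M - 1)"
    using u0 u1 assms(4) by (simp add: abs_mult abs_of_nonneg mult_mono)
  moreover have "\<bar>real_of_int q - lpi + bi * u\<bar> < real Q"
    using assms(1,10) unfolding u_def by (simp add: abs_mult)
  ultimately have h1: "real_of_int q > real_of_int lmin - real Q - bmax * (real N * real M - 1)"
    and h2: "real_of_int q < real_of_int lmax + real Q + bmax * (real N * real M - 1)"
    using assms(2,3) by linarith+
  have "real_of_int lmin - real Q - bmax * (real N * real M - 1) > -1"
    using assms(5) by linarith
  with h1 have "0 \<le> q" by linarith
  moreover have "q \<le> \<lfloor>real_of_int lmax + real Q + bmax * (real N * real M - 1)\<rfloor>"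
    using h2 by (subst le_floor_iff) linarith
  ultimately show ?thesis by simp
qed


lemma s_reduce:
  fixes M N Q :: nat and Ts bmax lpi bi :: real and lmin lmax m nd L :: int
    and a :: "real \<Rightarrow> complex" and X :: "int \<Rightarrow> int \<Rightarrow> complex"
  assumes "M > 0" "Ts > 0" and az: "\<And>t. \<bar>t\<bar> \<ge> real Q * Ts \<Longrightarrow> a t = 0"
    and "real_of_int lmin \<le> lpi" "lpi \<le> real_of_int lmax"
    and "\<bar>bi\<bar> \<le> bmax"
    and "\<lceil>real_of_int lmin - real Q - bmax * (real N * real M - 1)\<rceil> = 0"
    and Ldef: "L = \<lfloor>real_of_int lmax + real Q + bmax * (real N * real M - 1)\<rfloor>"
    and LM: "L < int M"
    and "0 \<le> m" and "m \<le> int M - 1" and "0 \<le> nd" and "nd \<le> int N - 1"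
  shows "oddm_s M N Ts a X ((real_of_int m * Ts + real_of_int nd * (real M * Ts)) - (lpi * Ts - bi * (real_of_int m * Ts + real_of_int nd * (real M * Ts))))
    = (\<Sum>l = 0..L. oddm_x N X ((m - l) mod int M) (if l \<le> m then nd else nd - 1)
         * a ((real_of_int l - lpi + bi * (real_of_int m + real_of_int nd * real M)) * Ts))"
proof -
  define v where "v = (real_of_int m * Ts + real_of_int nd * (real M * Ts)) - (lpi * Ts - bi * (real_of_int m * Ts + real_of_int nd * (real M * Ts)))"
  define F where "F = (\<lambda>(mm, nn). oddm_x N X mm nn * a (v - real_of_int mm * Ts - real_of_int nn * (real M * Ts)))"
  define D where "D = {0..int M - 1} \<times> {-1..int N - 1}"
  define g where "g = (\<lambda>l. ((m - l) mod int M, if l \<le> m then nd else nd - 1))"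
  have gsum: "fst (g l) + snd (g l) * int M = m - l + nd * int M" if "0 \<le> l" "l \<le> L" for l
  proof (cases "l \<le> m")
    case True
    then have "(m - l) mod int M = m - l" using \<open>m \<le> int M - 1\<close> that by (simp add: mod_pos_pos_trivial)
    then show ?thesis using True unfolding g_def by simp
  next
    case False
    then have "(m - l) mod int M = m - l + int M" using that LM \<open>0 \<le> m\<close>
      by (smt (verit) mod_pos_pos_trivial mod_add_self2)
    then show ?thesis using False unfolding g_def by (simp add: algebra_simps)
  qed
  have argeq: "v - real_of_int (fst (g l)) * Ts - real_of_int (snd (g l)) * (real M * Ts)
      = (real_of_int l - lpi + bi * (real_of_int m + real_of_int nd * real M)) * Ts"
    if "0 \<le> l" "l \<le> L" for l
  proof -
    have "real_of_int (fst (g l)) + real_of_int (snd (g l)) * real M = real_of_int m - real_of_int l + real_of_int nd * real M"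
      using arg_cong[OF gsum[OF that], of real_of_int] by simp
    then have "real_of_int (fst (g l)) * Ts + real_of_int (snd (g l)) * (real M * Ts) = (real_of_int m - real_of_int l + real_of_int nd * real M) * Ts"
      by (metis distrib_right mult.assoc)
    then show ?thesis unfolding v_def by (simp add: algebra_simps)
  qed
  have inj: "inj_on g {0..L}"
  proof
    fix l1 l2 assume "l1 \<in> {0..L}" "l2 \<in> {0..L}" "g l1 = g l2"
    then have "m - l1 + nd * int M = m - l2 + nd * int M" using gsum by (metis atLeastAtMost_iff)
    then show "l1 = l2" by simp
  qed
  have sub: "g ` {0..L} \<subseteq> D"
  proof
    fix p assume "p \<in> g ` {0..L}"
    then obtain l where l: "l \<in> {0..L}" "p = g l" by auto
    have "0 \<le> (m - l) mod int M" "(m - l) mod int M \<le> int M - 1" using assms(1) by auto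
    then show "p \<in> D" using l assms unfolding D_def g_def by auto
  qed
  have zero: "F p = 0" if "p \<in> D - g ` {0..L}" for p
  proof (rule ccontr)
    assume nz: "F p \<noteq> 0"
    obtain mm nn where p: "p = (mm, nn)" by fastforce
    have mm: "0 \<le> mm" "mm \<le> int M - 1" and nn: "-1 \<le> nn" "nn \<le> int N - 1" using that p unfolding D_def by auto
    define q where "q = m - mm + (nd - nn) * int M"
    have "a (v - real_of_int mm * Ts - real_of_int nn * (real M * Ts)) \<noteq> 0" using nz p unfolding F_def by auto
    then have "\<bar>v - real_of_int mm * Ts - real_of_int nn * (real M * Ts)\<bar> < real Q * Ts"
      using az by (meson not_less)
    moreover have "v - real_of_int mm * Ts - real_of_int nn * (real M * Ts) = (real_of_int q - lpi + bi * (real_of_int m + real_of_int nd * real M)) * Ts"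
      unfolding v_def q_def by (simp add: algebra_simps)
    ultimately have "0 \<le> q \<and> q \<le> L"
      using q_range[of Ts lmin lpi lmax bi bmax Q N M m nd q] assms Ldef by simp
    then have ql: "q \<in> {0..L}" by simp
    have "g q = p"
    proof (cases "q \<le> m")
      case True
      have "nn = nd"
      proof (rule ccontr)
        assume "nn \<noteq> nd"
        then have "nd - nn \<ge> 1 \<or> nd - nn \<le> -1" by linarith
        then show False
        proof
          assume "nd - nn \<ge> 1"
          then have "(nd - nn) * int M \<ge> int M" using mult_right_mono[of 1 "nd - nn" "int M"] by simp
          then show False using True q_def mm by linarith
        next
          assume "nd - nn \<le> -1"
          then have "(nd - nn) * int M \<le> - int M" using mult_right_mono[of "nd - nn" "-1" "int M"] by simp
          then show False using \<open>0 \<le> q \<and> q \<le> L\<close> q_def mm \<open>m \<le> int M - 1\<close> by linarith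
        qed
      qed
      then have "mm = m - q" using q_def by simp
      then show ?thesis using True \<open>nn = nd\<close> p mm unfolding g_def by (simp add: mod_pos_pos_trivial)
    next
      case False
      have "nn = nd - 1"
      proof (rule ccontr)
        assume "nn \<noteq> nd - 1"
        then have "nd - nn \<ge> 2 \<or> nd - nn \<le> 0" by linarith
        then show False
        proof
          assume "nd - nn \<ge> 2"
          then have "(nd - nn) * int M \<ge> 2 * int M" using mult_right_mono[of 2 "nd - nn" "int M"] by simp
          then show False using False q_def mm \<open>0 \<le> q \<and> q \<le> L\<close> LM \<open>0 \<le> m\<close> by linarith
        next
          assume "nd - nn \<le> 0"
          then have "(nd - nn) * int M \<le> 0" by (simp add: mult_nonpos_nonneg)
          then show False using False q_def mm by linarith
        qed
      qed
      then have "(nd - nn) * int M = int M" by simp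
      then have "q = m - mm + int M" using q_def by simp
      then have "m - q = mm - int M" by simp
      then have "(m - q) mod int M = (mm - int M) mod int M" by simp
      also have "\<dots> = mm mod int M" by (rule minus_mod_self2)
      also have "\<dots> = mm" using mm by (simp add: mod_pos_pos_trivial)
      finally have "(m - q) mod int M = mm" .
      then show ?thesis using False \<open>nn = nd - 1\<close> p unfolding g_def by simp
    qed
    then show False using ql that by blast
  qed
  have "oddm_s M N Ts a X v = sum F D"
    unfolding oddm_s_def D_def F_def by (simp add: sum.cartesian_product)
  also have "\<dots> = sum F (g ` {0..L})"
    by (rule sum.mono_neutral_right[OF _ sub]) (use zero in \<open>auto simp: D_def\<close>)
  also have "\<dots> = sum (F \<circ> g) {0..L}" by (rule sum.reindex[OF inj])
  also have "\<dots> = (\<Sum>l = 0..L. oddm_x N X ((m - l) mod int M) (if l \<le> m then nd else nd - 1)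
         * a ((real_of_int l - lpi + bi * (real_of_int m + real_of_int nd * real M)) * Ts))"
  proof (rule sum.cong)
    fix l assume "l \<in> {0..L}"
    then show "(F \<circ> g) l = oddm_x N X ((m - l) mod int M) (if l \<le> m then nd else nd - 1)
         * a ((real_of_int l - lpi + bi * (real_of_int m + real_of_int nd * real M)) * Ts)"
      using argeq[of l] unfolding F_def by (simp add: g_def case_prod_beta)
  qed simp
  finally show ?thesis unfolding v_def .
qed


definition cE :: "real \<Rightarrow> complex" where "cE r = exp (2 * pi * \<i> * complex_of_real r)"

lemma cE_add: "cE x * cE y = cE (x + y)"
  unfolding cE_def by (simp add: mult_exp_exp algebra_simps)

lemma cE_neg: "exp (- 2 * pi * \<i> * complex_of_real r) = cE (- r)"
  unfolding cE_def by simp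

lemma cE_zero: "cE 0 = 1" unfolding cE_def by simp

lemma exp_part:
  fixes M N :: nat and Ts kpi :: real and m n k nd c :: int
  assumes "M > 0" "N > 0" "Ts > 0" "c = 0 \<or> c = 1"
  shows "cE (kpi / (real N * real M * Ts) * (real_of_int m * Ts + real_of_int nd * (real M * Ts)))
      * cE (real_of_int (((n - k) mod int N) * (nd - c)) / real N)
      * cE (- (real_of_int (n * nd) / real N))
    = cE (- (real_of_int c * real_of_int (n - k) / real N))
      * cE (kpi * real_of_int m / (real N * real M))
      * cE (- (real_of_int nd * (real_of_int k - kpi) / real N))"
proof -
  define d where "d = (n - k) div int N"
  have B: "(n - k) mod int N = (n - k) - int N * d" unfolding d_def by (simp add: minus_div_mult_eq_mod [symmetric])
  have "kpi / (real N * real M * Ts) * (real_of_int m * Ts + real_of_int nd * (real M * Ts))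
      + real_of_int (((n - k) mod int N) * (nd - c)) / real N + - (real_of_int (n * nd) / real N)
      - (- (real_of_int c * real_of_int (n - k) / real N) + kpi * real_of_int m / (real N * real M)
         + - (real_of_int nd * (real_of_int k - kpi) / real N))
      = of_int (- d * (nd - c))"
    unfolding B using assms by (simp add: field_simps)
  then show ?thesis unfolding cE_add unfolding cE_def by (rule exp_cong_int)
qed

theorem theorem1:
  fixes M N Q P :: nat and Ts bmax :: real and lmin lmax :: int
    and a :: "real \<Rightarrow> complex" and X :: "int \<Rightarrow> int \<Rightarrow> complex"
    and h :: "nat \<Rightarrow> complex" and lp kp b :: "nat \<Rightarrow> real"
    and m n :: int
  assumes "M > 0" and "N > 0" and "Q > 0" and "Ts > 0"
    and "\<And>t. \<bar>t\<bar> \<ge> real Q * Ts \<Longrightarrow> a t = 0"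
    and "\<And>i. i \<in> {1..P} \<Longrightarrow> real_of_int lmin \<le> lp i \<and> lp i \<le> real_of_int lmax"
    and "\<And>i. i \<in> {1..P} \<Longrightarrow> \<bar>b i\<bar> \<le> bmax"
    and "bmax < 1"
    and "\<lceil>real_of_int lmin - real Q - bmax * (real N * real M - 1)\<rceil> = 0"
    and "\<lfloor>real_of_int lmax + real Q + bmax * (real N * real M - 1)\<rfloor> < int M"
    and "0 \<le> m" and "m \<le> int M - 1" and "0 \<le> n" and "n \<le> int N - 1"
  shows "oddm_Y M N Ts a X P h lp kp b m n =
    (\<Sum>l = 0..\<lfloor>real_of_int lmax + real Q + bmax * (real N * real M - 1)\<rfloor>.
       \<Sum>k = 0..int N - 1.
         X ((m - l) mod int M) ((n - k) mod int N) * oddm_phi M N (m - l) (n - k)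
         * oddm_G M N Ts a P h lp kp b l m k)"
proof -
  define L where "L = \<lfloor>real_of_int lmax + real Q + bmax * (real N * real M - 1)\<rfloor>"
  define c where "c = complex_of_real (1 / sqrt (real N))"
  define tt where "tt = (\<lambda>nd::int. real_of_int m * Ts + real_of_int nd * (real M * Ts))"
  define cc where "cc = (\<lambda>l::int. if l \<le> m then (0::int) else 1)"
  define aa where "aa = (\<lambda>l nd i. a ((real_of_int l - lp i + b i * (real_of_int m + real_of_int nd * real M)) * Ts))"
  define XX where "XX = (\<lambda>l k. X ((m - l) mod int M) ((n - k) mod int N))"
  define T where "T = (\<lambda>l k i nd. c * (h i * cE (kp i / (real N * real M * Ts) * tt nd)
      * (c * (XX l k * cE (real_of_int (((n - k) mod int N) * (nd - cc l)) / real N)) * aa l nd i)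
      * cE (- (real_of_int (n * nd) / real N))))"
  have LM: "L < int M" using assms(10) unfolding L_def .
  have rr: "oddm_r M N Ts a X P h lp kp b (tt nd) = (\<Sum>i = 1..P. h i * cE (kp i / (real N * real M * Ts) * tt nd)
      * (\<Sum>l = 0..L. (c * (\<Sum>k = 0..int N - 1. XX l k * cE (real_of_int (((n - k) mod int N) * (nd - cc l)) / real N))) * aa l nd i))"
    if nd: "0 \<le> nd" "nd \<le> int N - 1" for nd
    unfolding oddm_r_def
  proof (rule sum.cong[OF refl])
    fix i assume i: "i \<in> {1..P}"
    have "oddm_s M N Ts a X (tt nd - (lp i * Ts - b i * tt nd)) =
      (\<Sum>l = 0..L. oddm_x N X ((m - l) mod int M) (if l \<le> m then nd else nd - 1) * aa l nd i)"
      unfolding tt_def aa_def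
      by (rule s_reduce[where Q=Q and lmin=lmin and lmax=lmax and bmax=bmax])
         (use assms i nd LM in \<open>auto simp: L_def\<close>)
    also have "\<dots> = (\<Sum>l = 0..L. (c * (\<Sum>k = 0..int N - 1. XX l k * cE (real_of_int (((n - k) mod int N) * (nd - cc l)) / real N))) * aa l nd i)"
    proof (rule sum.cong[OF refl])
      fix l assume l: "l \<in> {0..L}"
      have "(if l \<le> m then nd else nd - 1) = nd - cc l" unfolding cc_def by simp
      moreover have "-1 \<le> nd - cc l" "nd - cc l \<le> int N - 1" using nd unfolding cc_def by auto
      ultimately show "oddm_x N X ((m - l) mod int M) (if l \<le> m then nd else nd - 1) * aa l nd i =
          (c * (\<Sum>k = 0..int N - 1. XX l k * cE (real_of_int (((n - k) mod int N) * (nd - cc l)) / real N))) * aa l nd i"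
        using x_expand[of N "nd - cc l" X "(m - l) mod int M" n] assms(2)
        unfolding c_def XX_def cE_def by simp
    qed
    finally show "h i * exp (2 * pi * \<i> * complex_of_real (kp i / (real N * real M * Ts) * tt nd)) *
         oddm_s M N Ts a X (tt nd - (lp i * Ts - b i * tt nd)) =
         h i * cE (kp i / (real N * real M * Ts) * tt nd) *
         (\<Sum>l = 0..L. c * (\<Sum>k = 0..int N - 1. XX l k * cE (real_of_int ((n - k) mod int N * (nd - cc l)) / real N)) * aa l nd i)"
      unfolding cE_def by simp
  qed
  have "oddm_Y M N Ts a X P h lp kp b m n = c * (\<Sum>nd = 0..int N - 1. oddm_r M N Ts a X P h lp kp b (tt nd) * cE (- (real_of_int (n * nd) / real N)))"
    unfolding oddm_Y_def c_def tt_def cE_neg ..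
  also have "\<dots> = (\<Sum>nd = 0..int N - 1. \<Sum>i = 1..P. \<Sum>l = 0..L. \<Sum>k = 0..int N - 1. T l k i nd)"
    unfolding sum_distrib_left
  proof (rule sum.cong[OF refl])
    fix nd assume "nd \<in> {0..int N - 1}"
    then show "c * (oddm_r M N Ts a X P h lp kp b (tt nd) * cE (- (real_of_int (n * nd) / real N))) = (\<Sum>i = 1..P. \<Sum>l = 0..L. \<Sum>k = 0..int N - 1. T l k i nd)"
      using rr[of nd] unfolding T_def by (simp add: sum_distrib_left sum_distrib_right mult.assoc)
  qed
  also have "\<dots> = (\<Sum>i = 1..P. \<Sum>nd = 0..int N - 1. \<Sum>l = 0..L. \<Sum>k = 0..int N - 1. T l k i nd)"
    by (rule sum.swap)
  also have "\<dots> = (\<Sum>i = 1..P. \<Sum>l = 0..L. \<Sum>nd = 0..int N - 1. \<Sum>k = 0..int N - 1. T l k i nd)"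
    by (rule sum.cong[OF refl], rule sum.swap)
  also have "\<dots> = (\<Sum>l = 0..L. \<Sum>i = 1..P. \<Sum>nd = 0..int N - 1. \<Sum>k = 0..int N - 1. T l k i nd)"
    by (rule sum.swap)
  also have "\<dots> = (\<Sum>l = 0..L. \<Sum>i = 1..P. \<Sum>k = 0..int N - 1. \<Sum>nd = 0..int N - 1. T l k i nd)"
    by (rule sum.cong[OF refl], rule sum.cong[OF refl], rule sum.swap)
  also have "\<dots> = (\<Sum>l = 0..L. \<Sum>k = 0..int N - 1. \<Sum>i = 1..P. \<Sum>nd = 0..int N - 1. T l k i nd)"
    by (rule sum.cong[OF refl], rule sum.swap)
  also have "\<dots> = (\<Sum>l = 0..L. \<Sum>k = 0..int N - 1.
         X ((m - l) mod int M) ((n - k) mod int N) * oddm_phi M N (m - l) (n - k)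
         * oddm_G M N Ts a P h lp kp b l m k)"
  proof (intro sum.cong[OF refl])
    fix l k assume l: "l \<in> {0..L}" and k: "k \<in> {0..int N - 1}"
    have "T l k i nd = XX l k * oddm_phi M N (m - l) (n - k) * (h i * cE (kp i * real_of_int m / (real N * real M))
        * complex_of_real (1 / real N) * (cE (- (real_of_int nd * (real_of_int k - kp i) / real N)) * aa l nd i))" for i nd
    proof -
      have ph: "oddm_phi M N (m - l) (n - k) = cE (- (real_of_int (cc l) * real_of_int (n - k) / real N))"
        using l LM assms(11,12) unfolding oddm_phi_def cc_def cE_def by (auto simp: cE_zero[unfolded cE_def])
      have cc2: "c * c = complex_of_real (1 / real N)" unfolding c_def
        by (simp flip: of_real_mult)
      have ex: "cE (kp i / (real N * real M * Ts) * tt nd)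
          * cE (real_of_int (((n - k) mod int N) * (nd - cc l)) / real N)
          * cE (- (real_of_int (n * nd) / real N))
        = cE (- (real_of_int (cc l) * real_of_int (n - k) / real N))
          * cE (kp i * real_of_int m / (real N * real M))
          * cE (- (real_of_int nd * (real_of_int k - kp i) / real N))"
        unfolding tt_def by (rule exp_part) (use assms in \<open>auto simp: cc_def\<close>)
      show ?thesis unfolding T_def ph
        by (smt (verit) ex cc2 mult.assoc mult.commute mult.left_commute)
    qed
    then show "(\<Sum>i = 1..P. \<Sum>nd = 0..int N - 1. T l k i nd) = X ((m - l) mod int M) ((n - k) mod int N) * oddm_phi M N (m - l) (n - k)
         * oddm_G M N Ts a P h lp kp b l m k"
      unfolding oddm_G_def XX_def aa_def cE_neg[symmetric]
      by (simp add: sum_distrib_left cE_def mult.assoc)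
  qed
  finally show ?thesis unfolding L_def .
qed

end
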